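(* Let $k\ge1$ and $d\ge0$ be integers. If there is a binary self-orthogonal $[g(k,d+4),k,d+4]$ Griesmer code and $g(k,d+4)>2^k$, then $d_{so}(N,k)=d+2$ for every integer $N$ with $g(k,d+2)+1\le N\le g(k,d+4)-1$.
   Context: $g(k,d)=\sum_{i=0}^{k-1}\lceil d/2^i\rceil$. A binary code is self-orthogonal if $C\subseteq C^\perp$; a binary $[n,k,d]$ code is Griesmer if $n=g(k,d)$. $d_{so}(n,k)$ denotes the largest minimum distance among all binary self-orthogonal $[n,k]$ codes. *)

theory Defs
  imports Complex_Main
begin

text \<open>Binary words of length n are boolean lists (True = 1, False = 0);
  addition over GF(2) is componentwise exclusive or.\<close>

definition zero_word :: "nat \<Rightarrow> bool list" where
  "zero_word n = replicate n False"

definition word_add :: "bool list \<Rightarrow> bool list \<Rightarrow> bool list" where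
  "word_add x y = map2 (\<noteq>) x y"

definition weight :: "bool list \<Rightarrow> nat" where
  "weight x = length (filter id x)"

text \<open>Standard inner product over GF(2): the number of common 1-positions, taken mod 2.\<close>
definition dot :: "bool list \<Rightarrow> bool list \<Rightarrow> nat" where
  "dot x y = length (filter id (map2 (\<and>) x y))"

text \<open>A binary linear [n,k] code: a GF(2)-subspace of GF(2)^n of dimension k,
  i.e. with exactly 2^k elements.\<close>
definition linear_code :: "nat \<Rightarrow> nat \<Rightarrow> bool list set \<Rightarrow> bool" where
  "linear_code n k C \<longleftrightarrow>
     C \<subseteq> {x. length x = n} \<and> zero_word n \<in> C \<and>
     (\<forall>x\<in>C. \<forall>y\<in>C. word_add x y \<in> C) \<and> card C = 2 ^ k"

definition min_dist :: "bool list set \<Rightarrow> nat" where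
  "min_dist C = Min {weight c | c. c \<in> C \<and> True \<in> set c}"

definition code :: "nat \<Rightarrow> nat \<Rightarrow> nat \<Rightarrow> bool list set \<Rightarrow> bool" where
  "code n k d C \<longleftrightarrow> linear_code n k C \<and> min_dist C = d"

definition self_orthogonal :: "bool list set \<Rightarrow> bool" where
  "self_orthogonal C \<longleftrightarrow> (\<forall>x\<in>C. \<forall>y\<in>C. even (dot x y))"

definition griesmer_g :: "nat \<Rightarrow> nat \<Rightarrow> nat" where
  "griesmer_g k d = (\<Sum>i<k. nat \<lceil>real d / 2 ^ i\<rceil>)"

definition griesmer_code :: "nat \<Rightarrow> nat \<Rightarrow> nat \<Rightarrow> bool list set \<Rightarrow> bool" where
  "griesmer_code n k d C \<longleftrightarrow> code n k d C \<and> n = griesmer_g k d"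

definition d_so :: "nat \<Rightarrow> nat \<Rightarrow> nat" where
  "d_so n k = Max {d. \<exists>C. code n k d C \<and> self_orthogonal C}"

end

theory Submission
  imports Defs
begin

lemma nat_ceil_div:
  assumes "b > 0"
  shows "nat \<lceil>real a / real b\<rceil> = (a + b - 1) div b"
proof -
  define q where "q = (a + b - 1) div b"
  define r where "r = (a + b - 1) mod b"
  have e: "a + b - 1 = b * q + r" unfolding q_def r_def by simp
  have rb: "r < b" unfolding r_def using assms by simp
  have "\<lceil>real a / real b\<rceil> = int q"
  proof (rule ceiling_unique)
    have "a \<le> b * q" using e rb assms by linarith
    then have "real a \<le> real b * real q" by (metis of_nat_le_iff of_nat_mult)
    then show "real a / real b \<le> real_of_int (int q)" using assms by (simp add: divide_le_eq mult.commute)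
    have "real b * (real q - 1) < real a"
    proof -
      have "b * q \<le> a + b - 1" using e by simp
      then have "b * q < a + b" using assms by linarith
      then have "real b * real q < real a + real b" by (metis of_nat_add of_nat_less_iff of_nat_mult)
      then show ?thesis by (simp add: algebra_simps)
    qed
    then show "real_of_int (int q) - 1 < real a / real b" using assms by (simp add: pos_less_divide_eq mult.commute)
  qed
  then show ?thesis unfolding q_def by simp
qed

lemma g_term: "nat \<lceil>real w / 2 ^ i\<rceil> = (w + 2^i - 1) div 2^i"
  using nat_ceil_div[of "2^i" w] by simp

lemma g_0[simp]: "griesmer_g 0 w = 0" by (simp add: griesmer_g_def)

lemma g_Suc: "griesmer_g (Suc k) w = w + griesmer_g k ((w + 1) div 2)"
proof -
  have t: "(w + 2 ^ Suc i - 1) div 2 ^ Suc i = ((w + 1) div 2 + 2 ^ i - 1) div 2 ^ i" for i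
  proof -
    have p: "(w + 1) div 2 + p - 1 = (w + 2 * p - 1) div 2" if "p \<ge> 1" for p :: nat
      using that by presburger
    have "(w + 1) div 2 + 2 ^ i - 1 = (w + 2 ^ Suc i - 1) div 2"
      using p[of "2^i"] by simp
    then show ?thesis by (simp add: div_mult2_eq mult.commute)
  qed
  show ?thesis
    unfolding griesmer_g_def g_term
    apply (subst sum.lessThan_Suc_shift)
    using t by simp
qed

lemma g_mono: "w \<le> w' \<Longrightarrow> griesmer_g k w \<le> griesmer_g k w'"
  unfolding griesmer_g_def g_term
  by (intro sum_mono div_le_mono) simp

lemma g_strict: "k \<ge> 1 \<Longrightarrow> griesmer_g k w < griesmer_g k (w + 1)"
proof -
  assume "k \<ge> 1" then obtain k' where k: "k = Suc k'" by (cases k) auto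
  have "griesmer_g k' ((w + 1) div 2) \<le> griesmer_g k' ((w + 1 + 1) div 2)" by (rule g_mono) simp
  then show ?thesis unfolding k g_Suc by simp
qed

lemma wa_len[simp]: "length (word_add x y) = min (length x) (length y)"
  by (simp add: word_add_def)

lemma wa_nth[simp]: "i < length x \<Longrightarrow> i < length y \<Longrightarrow> word_add x y ! i = (x ! i \<noteq> y ! i)"
  by (simp add: word_add_def)

lemma zw_len[simp]: "length (zero_word n) = n" by (simp add: zero_word_def)
lemma zw_nth[simp]: "i < n \<Longrightarrow> zero_word n ! i = False" by (simp add: zero_word_def)

lemma weight_map: "distinct P \<Longrightarrow> weight (map f P) = card {l \<in> set P. f l}"
proof -
  assume d: "distinct P"
  have "weight (map f P) = length (filter f P)"
    by (simp add: weight_def filter_map comp_def)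
  also have "\<dots> = card (set (filter f P))" using d by (metis distinct_card distinct_filter)
  finally show ?thesis by (simp add: set_filter)
qed

lemma weight_nth: "weight x = card {l. l < length x \<and> x ! l}"
proof -
  have "weight x = weight (map ((!) x) [0..<length x])" by (simp add: map_nth)
  also have "\<dots> = card {l \<in> set [0..<length x]. x ! l}" by (rule weight_map) simp
  finally show ?thesis by simp
qed

lemma dot_nth: "length y = length x \<Longrightarrow> dot x y = card {l. l < length x \<and> x ! l \<and> y ! l}"
proof -
  assume "length y = length x"
  then have "dot x y = weight (map2 (\<and>) x y)" by (simp add: dot_def weight_def)
  also have "\<dots> = card {l. l < length x \<and> x ! l \<and> y ! l}"
    unfolding weight_nth using \<open>length y = length x\<close> by (intro arg_cong[where f=card]) auto
  finally show ?thesis .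
qed

lemma dot_self: "dot x x = weight x"
proof -
  have "map2 (\<and>) x x = x" by (induct x) auto
  then show ?thesis by (simp add: dot_def weight_def)
qed

lemma nz_iff: "True \<in> set x \<longleftrightarrow> weight x > 0"
  by (simp add: weight_def filter_empty_conv) (metis (full_types))

lemma nz_iff2: "True \<in> set x \<longleftrightarrow> (\<exists>l < length x. x ! l)"
  by (metis in_set_conv_nth)

lemma weight_le: "weight x \<le> length x"
  by (simp add: weight_def)

lemma zero_iff: "\<not> True \<in> set x \<longleftrightarrow> x = zero_word (length x)"
  by (auto simp: zero_word_def nz_iff2 list_eq_iff_nth_eq)

lemma zw_weight[simp]: "weight (zero_word n) = 0"
  by (simp add: zero_word_def weight_def)

lemma zw_nz[simp]: "\<not> True \<in> set (zero_word n)"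
  by (simp add: zero_word_def)

lemma wa_self: "word_add x x = zero_word (length x)"
  by (rule nth_equalityI) auto

lemma wa_zero: "length x = n \<Longrightarrow> word_add x (zero_word n) = x"
  by (rule nth_equalityI) auto

lemma wa_comm: "word_add x y = word_add y x"
  by (rule nth_equalityI) auto

lemma wa_assoc: "length x = n \<Longrightarrow> length y = n \<Longrightarrow> length z = n \<Longrightarrow>
   word_add (word_add x y) z = word_add x (word_add y z)"
  by (rule nth_equalityI) auto

lemma wa_cancel: "length x = n \<Longrightarrow> length y = n \<Longrightarrow> word_add x (word_add x y) = y"
  by (rule nth_equalityI) auto

lemma wa_eq_zero: "length x = n \<Longrightarrow> length y = n \<Longrightarrow> word_add x y = zero_word n \<Longrightarrow> x = y"
  by (metis wa_cancel wa_zero)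

lemma map_nth_wa: "\<forall>l\<in>set P. l < length x \<and> l < length y \<Longrightarrow>
   map ((!) (word_add x y)) P = word_add (map ((!) x) P) (map ((!) y) P)"
  by (rule nth_equalityI) auto

lemma lc_len: "linear_code n k C \<Longrightarrow> x \<in> C \<Longrightarrow> length x = n"
  by (auto simp: linear_code_def)

lemma lc_finite: "linear_code n k C \<Longrightarrow> finite C"
  unfolding linear_code_def by (metis card_ge_0_finite pos2 zero_less_power)


locale resid =
  fixes n k C c
  assumes lc: "linear_code n (Suc k) C"
    and cC: "c \<in> C" and cnz: "True \<in> set c"
    and cmin: "\<forall>x\<in>C. True \<in> set x \<longrightarrow> weight c \<le> weight x"
begin

definition P where "P = filter (\<lambda>l. \<not> c ! l) [0..<n]"
definition phi where "phi x = map ((!) x) P"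

lemma lenc: "length c = n" using lc cC by (rule lc_len)
lemma lenC: "x \<in> C \<Longrightarrow> length x = n" using lc by (rule lc_len)
lemma zC: "zero_word n \<in> C" using lc by (simp add: linear_code_def)
lemma addC: "x \<in> C \<Longrightarrow> y \<in> C \<Longrightarrow> word_add x y \<in> C" using lc by (simp add: linear_code_def)
lemma finC: "finite C" using lc by (rule lc_finite)
lemma cardC: "card C = 2 ^ Suc k" using lc by (simp add: linear_code_def)

lemma setP: "set P = {l. l < n \<and> \<not> c ! l}" by (auto simp: P_def)
lemma distP: "distinct P" by (simp add: P_def)

lemma lenP: "length P = n - weight c"
proof -
  have "length P = card (set P)" using distP by (simp add: distinct_card)
  also have "set P = {..<n} - {l. l < n \<and> c ! l}" by (auto simp: setP)
  also have "card \<dots> = n - card {l. l < n \<and> c ! l}"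
    by (subst card_Diff_subset) auto
  finally show ?thesis by (simp add: weight_nth lenc)
qed

lemma len_phi[simp]: "length (phi x) = n - weight c" by (simp add: phi_def lenP)

lemma weight_phi: "weight (phi x) = card {l. l < n \<and> \<not> c ! l \<and> x ! l}"
  unfolding phi_def by (subst weight_map[OF distP]) (auto simp: setP intro!: arg_cong[where f=card])

lemma w_split: "x \<in> C \<Longrightarrow> weight x = dot x c + weight (phi x)"
proof -
  assume xC: "x \<in> C"
  have "{l. l < n \<and> x ! l} = {l. l < n \<and> x ! l \<and> c ! l} \<union> {l. l < n \<and> \<not> c ! l \<and> x ! l}" by auto
  then have "card {l. l < n \<and> x ! l} = card {l. l < n \<and> x ! l \<and> c ! l} + card {l. l < n \<and> \<not> c ! l \<and> x ! l}"
    by (simp, subst card_Un_disjoint) auto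
  moreover have "weight x = card {l. l < n \<and> x ! l}" by (simp add: weight_nth lenC[OF xC])
  moreover have "dot x c = card {l. l < n \<and> x ! l \<and> c ! l}" by (simp add: dot_nth lenC[OF xC] lenc)
  ultimately show ?thesis by (simp only: weight_phi)
qed

lemma wc_split: "x \<in> C \<Longrightarrow> weight (word_add x c) + dot x c = weight c + weight (phi x)"
proof -
  assume xC: "x \<in> C"
  have lx: "length x = n" using lenC[OF xC] .
  have "{l. l < n \<and> word_add x c ! l} = {l. l < n \<and> c ! l \<and> \<not> x ! l} \<union> {l. l < n \<and> \<not> c ! l \<and> x ! l}"
    using lx lenc by auto
  then have e1: "card {l. l < n \<and> word_add x c ! l} = card {l. l < n \<and> c ! l \<and> \<not> x ! l} + card {l. l < n \<and> \<not> c ! l \<and> x ! l}"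
    by (simp, subst card_Un_disjoint) auto
  have "{l. l < n \<and> c ! l} = {l. l < n \<and> c ! l \<and> \<not> x ! l} \<union> {l. l < n \<and> x ! l \<and> c ! l}" by auto
  then have e2: "card {l. l < n \<and> c ! l} = card {l. l < n \<and> c ! l \<and> \<not> x ! l} + card {l. l < n \<and> x ! l \<and> c ! l}"
    by (simp, subst card_Un_disjoint) auto
  moreover have "weight (word_add x c) = card {l. l < n \<and> word_add x c ! l}" by (simp add: weight_nth lx lenc)
  moreover have "weight c = card {l. l < n \<and> c ! l}" by (simp add: weight_nth lenc)
  moreover have "dot x c = card {l. l < n \<and> x ! l \<and> c ! l}" by (simp add: dot_nth lx lenc)
  ultimately show ?thesis using e1 e2 by (simp only: weight_phi)
qed

lemma phi_add: "x \<in> C \<Longrightarrow> y \<in> C \<Longrightarrow> phi (word_add x y) = word_add (phi x) (phi y)"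
  unfolding phi_def by (rule map_nth_wa) (auto simp: setP lenC)

lemma Pnth: "i < length P \<Longrightarrow> P ! i < n \<and> \<not> c ! (P ! i)"
proof -
  assume "i < length P"
  then have "P ! i \<in> set P" by (rule nth_mem)
  then show ?thesis by (simp add: setP)
qed

lemma phi_c: "phi c = zero_word (n - weight c)"
  by (rule nth_equalityI) (auto simp: phi_def lenP Pnth[unfolded lenP])

lemma phi_zero: "phi (zero_word n) = zero_word (n - weight c)"
  by (rule nth_equalityI) (auto simp: phi_def lenP Pnth[unfolded lenP])

lemma dot_le: "x \<in> C \<Longrightarrow> dot x c \<le> weight c"
  by (auto simp: dot_nth lenc lenC weight_nth intro!: card_mono)

lemma kernel: "z \<in> C \<Longrightarrow> weight (phi z) = 0 \<Longrightarrow> z = zero_word n \<or> z = c"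
proof -
  assume zC: "z \<in> C" and w0: "weight (phi z) = 0"
  show ?thesis
  proof (cases "True \<in> set z")
    case False then show ?thesis using zero_iff[of z] lenC[OF zC] by simp
  next
    case True
    then have "weight c \<le> weight z" using cmin zC by auto
    moreover have "weight z = dot z c" using w_split[OF zC] w0 by simp
    ultimately have "dot z c = weight c" using dot_le[OF zC] by simp
    then have "weight (word_add z c) = 0" using wc_split[OF zC] w0 by simp
    then have "\<not> True \<in> set (word_add z c)" by (simp add: nz_iff)
    then have "word_add z c = zero_word (length (word_add z c))" by (simp only: zero_iff)
    then have "word_add z c = zero_word n" using lenC[OF zC] lenc by simp
    then show ?thesis using wa_eq_zero[of z n c] lenC[OF zC] lenc by simp
  qed
qed

lemma fiber: "x \<in> C \<Longrightarrow> {y \<in> C. phi y = phi x} = {x, word_add x c}"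
proof (intro equalityI subsetI)
  fix y assume xC: "x \<in> C" and "y \<in> {y \<in> C. phi y = phi x}"
  then have yC: "y \<in> C" and e: "phi y = phi x" by auto
  have "phi (word_add x y) = zero_word (n - weight c)"
    using phi_add[OF xC yC] e wa_self[of "phi x"] by simp
  then have "word_add x y = zero_word n \<or> word_add x y = c"
    using kernel[OF addC[OF xC yC]] by simp
  then show "y \<in> {x, word_add x c}"
  proof
    assume "word_add x y = zero_word n" then show ?thesis using wa_eq_zero[of x n y] lenC xC yC by simp
  next
    assume "word_add x y = c"
    then have "word_add x c = word_add x (word_add x y)" by simp
    then have "word_add x c = y" using wa_cancel[of x n y] lenC xC yC by simp
    then show ?thesis by simp
  qed
next
  fix y assume xC: "x \<in> C" and "y \<in> {x, word_add x c}"
  moreover have "phi (word_add x c) = phi x"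
    using phi_add[OF xC cC] phi_c wa_zero[of "phi x"] by simp
  ultimately show "y \<in> {y \<in> C. phi y = phi x}" using addC cC by auto
qed

lemma neq_c: "x \<in> C \<Longrightarrow> x \<noteq> word_add x c"
proof
  assume xC: "x \<in> C" and "x = word_add x c"
  then have "word_add x x = word_add x (word_add x c)" by simp
  then have "zero_word n = c" using wa_self[of x] wa_cancel[of x n c] lenC xC lenc by simp
  then show False using cnz zw_nz[of n] by metis
qed

lemma card_img: "card (phi ` C) = 2 ^ k"
proof -
  define fib where "fib r = {y \<in> C. phi y = r}" for r
  have U: "\<Union> (fib ` phi ` C) = C" by (auto simp: fib_def)
  have "2 * card (fib ` phi ` C) = card (\<Union> (fib ` phi ` C))"
    by (rule card_partition) (use finC U fiber neq_c in \<open>auto simp: fib_def\<close>)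
  moreover have "inj_on fib (phi ` C)"
    by (rule inj_onI) (auto simp: fib_def set_eq_iff)
  ultimately have "2 * card (phi ` C) = card C" using U by (simp add: card_image)
  then show ?thesis using cardC by simp
qed

lemma resid_lc: "linear_code (n - weight c) k (phi ` C)"
  unfolding linear_code_def
proof (intro conjI ballI)
  show "phi ` C \<subseteq> {x. length x = n - weight c}" by auto
  show "zero_word (n - weight c) \<in> phi ` C" using zC phi_zero by (metis image_eqI)
  fix x y assume "x \<in> phi ` C" "y \<in> phi ` C"
  then obtain x' y' where "x' \<in> C" "y' \<in> C" "x = phi x'" "y = phi y'" by auto
  then show "word_add x y \<in> phi ` C" using phi_add addC by (metis image_eqI)
qed (rule card_img)

lemma resid_nz: "x \<in> C \<Longrightarrow> True \<in> set (phi x) \<Longrightarrow> True \<in> set x \<and> True \<in> set (word_add x c)"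
proof
  assume xC: "x \<in> C" and nz: "True \<in> set (phi x)"
  show "True \<in> set x"
  proof (rule ccontr)
    assume "True \<notin> set x" then have "x = zero_word n" using zero_iff[of x] lenC xC by simp
    then show False using nz phi_zero by simp
  qed
  show "True \<in> set (word_add x c)"
  proof (rule ccontr)
    assume "True \<notin> set (word_add x c)"
    then have "word_add x c = zero_word (length (word_add x c))" by (simp only: zero_iff)
    then have "word_add x c = zero_word n" using lenC xC lenc by simp
    then have "x = c" using wa_eq_zero[of x n c] lenC xC lenc by simp
    then show False using nz phi_c by simp
  qed
qed

lemma resid_weight: "x \<in> C \<Longrightarrow> True \<in> set (phi x) \<Longrightarrow> weight c \<le> 2 * weight (phi x)"
proof -
  assume xC: "x \<in> C" and nz: "True \<in> set (phi x)"
  have "weight c \<le> weight x" "weight c \<le> weight (word_add x c)"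
    using resid_nz[OF xC nz] cmin xC addC[OF xC cC] by auto
  then show ?thesis using w_split[OF xC] wc_split[OF xC] by linarith
qed

end

lemma exists_nz: "linear_code n (Suc k) C \<Longrightarrow> \<exists>x\<in>C. True \<in> set x"
proof (rule ccontr)
  assume lc: "linear_code n (Suc k) C" and "\<not> (\<exists>x\<in>C. True \<in> set x)"
  then have "C \<subseteq> {zero_word n}" using zero_iff lc_len[OF lc] by (simp add: subset_iff)
  then have "card C \<le> card {zero_word n}" using card_mono[of "{zero_word n}" C] by simp
  moreover have "(1::nat) \<le> 2 ^ k" by simp
  moreover have "card C = 2 * 2 ^ k" using lc by (simp add: linear_code_def)
  ultimately show False by simp
qed

lemma exists_min: "linear_code n (Suc k) C \<Longrightarrow>
  \<exists>c\<in>C. True \<in> set c \<and> (\<forall>x\<in>C. True \<in> set x \<longrightarrow> weight c \<le> weight x) \<and> weight c = min_dist C"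
proof -
  assume lc: "linear_code n (Suc k) C"
  let ?S = "{weight c | c. c \<in> C \<and> True \<in> set c}"
  have fin: "finite ?S" using lc_finite[OF lc] by simp
  have ne: "?S \<noteq> {}" using exists_nz[OF lc] by auto
  have "Min ?S \<in> ?S" using fin ne by (rule Min_in)
  then obtain c where c: "c \<in> C" "True \<in> set c" "weight c = Min ?S" by auto
  have "\<forall>x\<in>C. True \<in> set x \<longrightarrow> weight c \<le> weight x"
    unfolding c(3) using fin by (auto intro: Min_le)
  then show ?thesis using c by (auto simp: min_dist_def)
qed

theorem griesmer_bound:
  "linear_code n k C \<Longrightarrow> (\<forall>x\<in>C. True \<in> set x \<longrightarrow> w \<le> weight x) \<Longrightarrow> griesmer_g k w \<le> n"
proof (induction k arbitrary: n C w)
  case 0 then show ?case by simp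
next
  case (Suc k)
  obtain c where c: "c \<in> C" "True \<in> set c" "\<forall>x\<in>C. True \<in> set x \<longrightarrow> weight c \<le> weight x"
    using exists_min[OF Suc.prems(1)] by blast
  interpret r: resid n k C c using Suc.prems(1) c by unfold_locales
  have "griesmer_g k ((weight c + 1) div 2) \<le> n - weight c"
  proof (rule Suc.IH[OF r.resid_lc], intro ballI impI)
    fix y assume "y \<in> r.phi ` C" "True \<in> set y"
    then obtain x where "x \<in> C" "y = r.phi x" by auto
    then show "(weight c + 1) div 2 \<le> weight y" using r.resid_weight \<open>True \<in> set y\<close> by fastforce
  qed
  moreover have "weight c \<le> n" using weight_le[of c] r.lenc by simp
  ultimately have "griesmer_g (Suc k) (weight c) \<le> n" by (simp add: g_Suc)
  moreover have "w \<le> weight c" using Suc.prems(2) c by auto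
  ultimately show ?case using g_mono by (meson le_trans)
qed


lemma even_weight: "self_orthogonal C \<Longrightarrow> x \<in> C \<Longrightarrow> even (weight x)"
  unfolding self_orthogonal_def using dot_self by metis

lemma four_dvd:
  assumes lc: "linear_code n (Suc k) C" and k1: "k \<ge> 1" and so: "self_orthogonal C"
    and md: "min_dist C = D" and ng: "n = griesmer_g (Suc k) D"
  shows "even D" "4 dvd D"
proof -
  obtain c where c: "c \<in> C" "True \<in> set c" "\<forall>x\<in>C. True \<in> set x \<longrightarrow> weight c \<le> weight x" "weight c = D"
    using exists_min[OF lc] md by blast
  interpret r: resid n k C c using lc c by unfold_locales
  show ev: "even D" using even_weight[OF so c(1)] c(4) by simp
  then obtain q where q: "D = 2 * q" by blast
  show "4 dvd D"
  proof (rule ccontr)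
    assume "\<not> 4 dvd D"
    then have oq: "odd q" using q by auto
    have "griesmer_g k (q + 1) \<le> n - weight c"
    proof (rule griesmer_bound[OF r.resid_lc], intro ballI impI)
      fix y assume "y \<in> r.phi ` C" "True \<in> set y"
      then obtain x where xC: "x \<in> C" and y: "y = r.phi x" by auto
      have "D \<le> 2 * weight y" using r.resid_weight[OF xC] \<open>True \<in> set y\<close> y c(4) by simp
      moreover have "even (weight y)"
      proof -
        have "even (weight x)" using even_weight[OF so xC] .
        moreover have "even (dot x c)" using so xC c(1) unfolding self_orthogonal_def by blast
        ultimately show ?thesis using r.w_split[OF xC] y by simp
      qed
      ultimately show "q + 1 \<le> weight y" using q oq by presburger
    qed
    moreover have "n = D + griesmer_g k q" using ng q by (simp add: g_Suc)
    moreover have "griesmer_g k q < griesmer_g k (q + 1)" using g_strict k1 by blast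
    ultimately show False using c(4) by linarith
  qed
qed

fun spn :: "nat \<Rightarrow> bool list list \<Rightarrow> bool list set" where
  "spn n [] = {zero_word n}"
| "spn n (b # bs) = spn n bs \<union> word_add b ` spn n bs"

lemma spn_len: "\<forall>b\<in>set bs. length b = n \<Longrightarrow> x \<in> spn n bs \<Longrightarrow> length x = n"
  by (induction bs arbitrary: x) auto

lemma spn_sub: "linear_code n k C \<Longrightarrow> set bs \<subseteq> C \<Longrightarrow> spn n bs \<subseteq> C"
  by (induction bs) (auto simp: linear_code_def)

lemma spn_fin: "finite (spn n bs)"
  by (induction bs) auto

lemma spn_add: "\<forall>b\<in>set bs. length b = n \<Longrightarrow> x \<in> spn n bs \<Longrightarrow> y \<in> spn n bs \<Longrightarrow> word_add x y \<in> spn n bs"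
proof (induction bs arbitrary: x y)
  case Nil then show ?case using wa_self[of "zero_word n"] by simp
next
  case (Cons b bs)
  have lb: "length b = n" and lbs: "\<forall>b\<in>set bs. length b = n" using Cons.prems(1) by auto
  have IH: "\<And>x y. x \<in> spn n bs \<Longrightarrow> y \<in> spn n bs \<Longrightarrow> word_add x y \<in> spn n bs"
    using Cons.IH lbs by blast
  have L: "\<And>z. z \<in> spn n bs \<Longrightarrow> length z = n" using spn_len[OF lbs] by blast
  have xc: "x \<in> spn n bs \<or> (\<exists>x'\<in>spn n bs. x = word_add b x')" using Cons.prems(2) by auto
  have yc: "y \<in> spn n bs \<or> (\<exists>y'\<in>spn n bs. y = word_add b y')" using Cons.prems(3) by auto
  show ?case
  proof (cases "x \<in> spn n bs")
    case xin: True
    show ?thesis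
    proof (cases "y \<in> spn n bs")
      case True then show ?thesis using IH xin by simp
    next
      case False
      then obtain y' where y': "y' \<in> spn n bs" "y = word_add b y'" using yc by blast
      then have "word_add x y = word_add b (word_add x y')"
        using L[OF xin] L[OF y'(1)] lb by (intro nth_equalityI) auto
      then show ?thesis using IH xin y' by simp
    qed
  next
    case False
    then obtain x' where x': "x' \<in> spn n bs" "x = word_add b x'" using xc by blast
    show ?thesis
    proof (cases "y \<in> spn n bs")
      case yin: True
      then have "word_add x y = word_add b (word_add x' y)"
        using L[OF yin] L[OF x'(1)] lb x'(2) by (intro nth_equalityI) auto
      then show ?thesis using IH yin x' by simp
    next
      case False
      then obtain y' where y': "y' \<in> spn n bs" "y = word_add b y'" using yc by blast
      then have "word_add x y = word_add x' y'"
        using L[OF y'(1)] L[OF x'(1)] lb x'(2) by (intro nth_equalityI) auto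
      then show ?thesis using IH x' y' by simp
    qed
  qed
qed

lemma spn_col: "\<forall>b\<in>set bs. length b = n \<and> b ! i = b ! j \<Longrightarrow> i < n \<Longrightarrow> j < n \<Longrightarrow> x \<in> spn n bs \<Longrightarrow> x ! i = x ! j"
proof (induction bs arbitrary: x)
  case Nil then show ?case by simp
next
  case (Cons b bs)
  have L: "\<And>z. z \<in> spn n bs \<Longrightarrow> length z = n" using spn_len Cons.prems(1) by (meson list.set_intros(2))
  from Cons.prems(4) show ?case
  proof (simp only: spn.simps, elim UnE imageE)
    assume "x \<in> spn n bs" then show ?thesis using Cons by simp
  next
    fix z assume "x = word_add b z" "z \<in> spn n bs"
    then show ?thesis using Cons L[of z] by simp
  qed
qed

lemma basis_ex: "linear_code n k C \<Longrightarrow> m \<le> k \<Longrightarrow> \<exists>bs. length bs = m \<and> set bs \<subseteq> C \<and> card (spn n bs) = 2 ^ m"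
proof (induction m)
  case 0 then show ?case by (intro exI[of _ "[]"]) simp
next
  case (Suc m)
  then obtain bs where bs: "length bs = m" "set bs \<subseteq> C" "card (spn n bs) = 2 ^ m" by auto
  let ?S = "spn n bs"
  have sub: "?S \<subseteq> C" using spn_sub[OF Suc.prems(1) bs(2)] .
  have lbs: "\<forall>b\<in>set bs. length b = n" using bs(2) lc_len[OF Suc.prems(1)] by blast
  have "card ?S < card C" using bs(3) Suc.prems by (simp add: linear_code_def)
  moreover have "C \<subseteq> ?S \<Longrightarrow> card C \<le> card ?S" using spn_fin card_mono by blast
  ultimately have "\<not> C \<subseteq> ?S" by linarith
  then obtain x where xC: "x \<in> C" and xS: "x \<notin> ?S" by blast
  have lx: "length x = n" using lc_len[OF Suc.prems(1) xC] .
  have L: "\<And>z. z \<in> ?S \<Longrightarrow> length z = n" using spn_len[OF lbs] by blast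
  have disj: "?S \<inter> word_add x ` ?S = {}"
  proof (rule ccontr)
    assume "?S \<inter> word_add x ` ?S \<noteq> {}"
    then obtain z y where "y \<in> ?S" "z \<in> ?S" "y = word_add x z" by auto
    then have "x = word_add y z" using L[OF \<open>z \<in> ?S\<close>] lx by (intro nth_equalityI) auto
    then show False using spn_add[OF lbs] \<open>y \<in> ?S\<close> \<open>z \<in> ?S\<close> xS by blast
  qed
  have inj: "inj_on (word_add x) ?S"
  proof (rule inj_onI)
    fix a c assume "a \<in> ?S" "c \<in> ?S" "word_add x a = word_add x c"
    then have "word_add x (word_add x a) = word_add x (word_add x c)" by simp
    then show "a = c" using wa_cancel[of x n a] wa_cancel[of x n c] L \<open>a \<in> ?S\<close> \<open>c \<in> ?S\<close> lx by simp
  qed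
  have "card (spn n (x # bs)) = card ?S + card (word_add x ` ?S)"
    using disj spn_fin by (simp add: card_Un_disjoint)
  also have "\<dots> = 2 ^ Suc m" using inj bs(3) by (simp add: card_image)
  finally show ?case using bs xC by (intro exI[of _ "x # bs"]) auto
qed

lemma equal_cols:
  assumes lc: "linear_code n k C" and big: "n > 2 ^ k"
  shows "\<exists>i j. i < n \<and> j < n \<and> i \<noteq> j \<and> (\<forall>x\<in>C. x ! i = x ! j)"
proof -
  obtain bs where bs: "length bs = k" "set bs \<subseteq> C" "card (spn n bs) = 2 ^ k"
    using basis_ex[OF lc] by blast
  have eq: "spn n bs = C"
    using card_subset_eq[OF lc_finite[OF lc] spn_sub[OF lc bs(2)]] bs(3) lc by (simp add: linear_code_def)
  define f where "f j = map (\<lambda>b. b ! j) bs" for j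
  have "f ` {..<n} \<subseteq> {xs. set xs \<subseteq> UNIV \<and> length xs = k}" using bs(1) by (auto simp: f_def)
  then have "card (f ` {..<n}) \<le> 2 ^ k"
    using card_mono[OF finite_lists_length_eq[of "UNIV :: bool set" k]] card_lists_length_eq[of "UNIV :: bool set" k]
    by simp
  moreover have "inj_on f {..<n} \<Longrightarrow> card (f ` {..<n}) = n" using card_image[of f "{..<n}"] by simp
  ultimately have "\<not> inj_on f {..<n}" using big by linarith
  then obtain i j where ij: "i < n" "j < n" "i \<noteq> j" "f i = f j" by (auto simp: inj_on_def)
  then have "\<forall>b\<in>set bs. length b = n \<and> b ! i = b ! j"
    using bs(2) lc_len[OF lc] by (auto simp: f_def map_eq_conv)
  then have "\<forall>x\<in>C. x ! i = x ! j" using spn_col ij eq by blast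
  then show ?thesis using ij by blast
qed


lemma map2_and: "map2 (\<and>) (map f L) (map g L) = map (\<lambda>l. f l \<and> g l) L"
  by (induct L) auto

lemma dot_map: "distinct L \<Longrightarrow> dot (map f L) (map g L) = card {l \<in> set L. f l \<and> g l}"
proof -
  assume d: "distinct L"
  have "dot (map f L) (map g L) = weight (map (\<lambda>l. f l \<and> g l) L)"
    unfolding dot_def weight_def map2_and ..
  then show ?thesis using weight_map[OF d] by simp
qed

lemma delete_pad:
  assumes lc: "linear_code n k C" and so: "self_orthogonal C" and D3: "D \<ge> 3"
    and nzw: "\<forall>x\<in>C. True \<in> set x \<longrightarrow> D \<le> weight x"
    and ij: "i < n" "j < n" "i \<noteq> j" and col: "\<forall>x\<in>C. x ! i = x ! j"
  shows "\<exists>C'. linear_code (n - 2 + m) k C' \<and> self_orthogonal C' \<and> (\<forall>x\<in>C'. True \<in> set x \<longrightarrow> D - 2 \<le> weight x)"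
proof -
  define L where "L = filter (\<lambda>l. l \<noteq> i \<and> l \<noteq> j) [0..<n] @ [n..<n+m]"
  define tau where "tau x = map (\<lambda>l. l < n \<and> x ! l) L" for x
  have dL: "distinct L" by (auto simp: L_def)
  have len1: "length (filter (\<lambda>l. l \<noteq> i \<and> l \<noteq> j) [0..<n]) = n - 2"
  proof -
    have "length (filter (\<lambda>l. l \<noteq> i \<and> l \<noteq> j) [0..<n]) = card (set (filter (\<lambda>l. l \<noteq> i \<and> l \<noteq> j) [0..<n]))"
      by (metis distinct_card distinct_filter distinct_upt)
    also have "set (filter (\<lambda>l. l \<noteq> i \<and> l \<noteq> j) [0..<n]) = {..<n} - {i, j}" by auto
    also have "card \<dots> = n - 2" using ij by (subst card_Diff_subset) auto
    finally show ?thesis .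
  qed
  have lenL: "length L = n - 2 + m" using len1 by (simp add: L_def)
  have lt: "length (tau x) = n - 2 + m" for x by (simp add: tau_def lenL)
  have Lset: "{l \<in> set L. l < n \<and> P l} = {l. l < n \<and> l \<noteq> i \<and> l \<noteq> j \<and> P l}" for P
    by (auto simp: L_def)
  have wt: "weight (tau x) = card {l. l < n \<and> l \<noteq> i \<and> l \<noteq> j \<and> x ! l}" for x
    unfolding tau_def weight_map[OF dL] using Lset[of "\<lambda>l. x ! l"] by simp
  have dt: "dot (tau x) (tau y) = card {l. l < n \<and> l \<noteq> i \<and> l \<noteq> j \<and> x ! l \<and> y ! l}" for x y
    unfolding tau_def dot_map[OF dL] using Lset[of "\<lambda>l. x ! l \<and> y ! l"] by (simp add: conj_ac)
  have wle: "weight x \<le> weight (tau x) + 2" if "x \<in> C" for x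
  proof -
    have lx: "length x = n" using lc_len[OF lc that] .
    have "{l. l < n \<and> x ! l} \<subseteq> {l. l < n \<and> l \<noteq> i \<and> l \<noteq> j \<and> x ! l} \<union> {i, j}" by auto
    then have "card {l. l < n \<and> x ! l} \<le> card ({l. l < n \<and> l \<noteq> i \<and> l \<noteq> j \<and> x ! l} \<union> {i, j})"
      by (intro card_mono) auto
    also have "\<dots> \<le> card {l. l < n \<and> l \<noteq> i \<and> l \<noteq> j \<and> x ! l} + card {i, j}" by (rule card_Un_le)
    also have "\<dots> \<le> card {l. l < n \<and> l \<noteq> i \<and> l \<noteq> j \<and> x ! l} + 2" by (simp add: card_insert_le_m1)
    moreover have "weight x = card {l. l < n \<and> x ! l}" by (simp add: weight_nth lx)
    ultimately show ?thesis by (simp only: wt)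
  qed
  have dsplit: "even (dot (tau x) (tau y))" if "x \<in> C" "y \<in> C" for x y
  proof -
    have lx: "length x = n" using lc_len[OF lc that(1)] .
    have ly: "length y = n" using lc_len[OF lc that(2)] .
    let ?A = "{l. l < n \<and> l \<noteq> i \<and> l \<noteq> j \<and> x ! l \<and> y ! l}"
    let ?B = "{l. l \<in> {i, j} \<and> x ! l \<and> y ! l}"
    have "{l. l < n \<and> x ! l \<and> y ! l} = ?A \<union> ?B" using ij by auto
    then have dxy: "dot x y = card ?A + card ?B" using lx ly
      by (simp add: dot_nth, subst card_Un_disjoint) auto
    have B02: "card ?B = 0 \<or> card ?B = 2"
    proof (cases "x ! i \<and> y ! i")
      case True
      then have "?B = {i, j}" using col that by auto
      then show ?thesis using ij by simp
    next
      case False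
      then have "?B = {}" using col that by auto
      then show ?thesis by simp
    qed
    have ed: "even (dot x y)" using so that unfolding self_orthogonal_def by blast
    have aux2: "c = 0 \<or> c = 2 \<Longrightarrow> even c" for c :: nat by auto
    have eB: "even (card ?B)" using aux2[OF B02] .
    have aux: "even (a + b) \<Longrightarrow> even b \<Longrightarrow> even a" for a b :: nat by simp
    have "even (card ?A)" using aux[of "card ?A" "card ?B"] ed eB dxy by argo
    then show ?thesis using dt by simp
  qed
  have hom: "tau (word_add x y) = word_add (tau x) (tau y)" if "x \<in> C" "y \<in> C" for x y
    using lc_len[OF lc that(1)] lc_len[OF lc that(2)]
    by (intro nth_equalityI) (auto simp: tau_def)
  have tz: "tau (zero_word n) = zero_word (n - 2 + m)"
    by (intro nth_equalityI) (auto simp: tau_def lenL)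
  have addC: "word_add x y \<in> C" if "x \<in> C" "y \<in> C" for x y using lc that by (simp add: linear_code_def)
  have zC: "zero_word n \<in> C" using lc by (simp add: linear_code_def)
  have nzpre: "True \<in> set x" if "x \<in> C" "True \<in> set (tau x)" for x
  proof (rule ccontr)
    assume "True \<notin> set x"
    then have "x = zero_word n" using zero_iff[of x] lc_len[OF lc that(1)] by simp
    then show False using that(2) tz by simp
  qed
  have inj: "inj_on tau C"
  proof (rule inj_onI)
    fix x y assume xC: "x \<in> C" and yC: "y \<in> C" and e: "tau x = tau y"
    have "tau (word_add x y) = zero_word (n - 2 + m)"
      using hom[OF xC yC] e wa_self[of "tau y"] lt by simp
    then have "weight (tau (word_add x y)) = 0" by simp
    then have "weight (word_add x y) \<le> 2" using wle[OF addC[OF xC yC]] by simp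
    then have "\<not> True \<in> set (word_add x y)" using nzw addC[OF xC yC] D3 by fastforce
    then have "word_add x y = zero_word (length (word_add x y))" by (simp only: zero_iff)
    then have "word_add x y = zero_word n" using lc_len[OF lc xC] lc_len[OF lc yC] by simp
    then show "x = y" using wa_eq_zero[of x n y] lc_len[OF lc xC] lc_len[OF lc yC] by simp
  qed
  have "linear_code (n - 2 + m) k (tau ` C)"
    unfolding linear_code_def
  proof (intro conjI ballI)
    show "tau ` C \<subseteq> {x. length x = n - 2 + m}" using lt by auto
    show "zero_word (n - 2 + m) \<in> tau ` C" using zC tz by (metis image_eqI)
    show "card (tau ` C) = 2 ^ k" using card_image[OF inj] lc by (simp add: linear_code_def)
    fix x y assume "x \<in> tau ` C" "y \<in> tau ` C"
    then obtain x' y' where "x' \<in> C" "y' \<in> C" "x = tau x'" "y = tau y'" by auto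
    then show "word_add x y \<in> tau ` C" using hom addC by (metis image_eqI)
  qed
  moreover have "self_orthogonal (tau ` C)"
    unfolding self_orthogonal_def using dsplit by auto
  moreover have "\<forall>x\<in>tau ` C. True \<in> set x \<longrightarrow> D - 2 \<le> weight x"
  proof (intro ballI impI)
    fix z assume "z \<in> tau ` C" "True \<in> set z"
    then obtain x where xC: "x \<in> C" and z: "z = tau x" by auto
    then have "True \<in> set x" using nzpre \<open>True \<in> set z\<close> by simp
    then have "D \<le> weight x" using nzw xC by simp
    then show "D - 2 \<le> weight z" using wle[OF xC] z by simp
  qed
  ultimately show ?thesis by blast
qed


theorem lemma5p5:
  fixes k d :: nat
  assumes "k \<ge> 1"
    and "\<exists>C. griesmer_code (griesmer_g k (d + 4)) k (d + 4) C \<and> self_orthogonal C"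
    and "griesmer_g k (d + 4) > 2 ^ k"
  shows "\<forall>N. griesmer_g k (d + 2) + 1 \<le> N \<and> N \<le> griesmer_g k (d + 4) - 1
              \<longrightarrow> d_so N k = d + 2"
proof (intro allI impI)
  fix N assume hN: "griesmer_g k (d + 2) + 1 \<le> N \<and> N \<le> griesmer_g k (d + 4) - 1"
  define D where "D = d + 4"
  define n where "n = griesmer_g k D"
  obtain C0 where gc: "griesmer_code n k D C0" and so0: "self_orthogonal C0"
    using assms(2) unfolding D_def n_def by blast
  have lc0: "linear_code n k C0" and md0: "min_dist C0 = D"
    using gc by (auto simp: griesmer_code_def code_def)
  obtain k' where k: "k = Suc k'" using assms(1) by (cases k) auto
  obtain c0 where c0: "c0 \<in> C0" "True \<in> set c0" "\<forall>x\<in>C0. True \<in> set x \<longrightarrow> weight c0 \<le> weight x" "weight c0 = D"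
    using exists_min[OF lc0[unfolded k]] md0 by blast
  have evD: "even D" using even_weight[OF so0 c0(1)] c0(4) by simp
  then have evd: "even d" by (simp add: D_def)
  have big: "n > 2 ^ k" using assms(3) by (simp add: n_def D_def)
  have upper: "d' \<le> d + 2" if lc: "linear_code N k C" and so: "self_orthogonal C" and md: "min_dist C = d'" for C d'
  proof -
    obtain c where c: "c \<in> C" "True \<in> set c" "\<forall>x\<in>C. True \<in> set x \<longrightarrow> weight c \<le> weight x" "weight c = d'"
      using exists_min[OF lc[unfolded k]] md by blast
    have gb: "griesmer_g k d' \<le> N" using griesmer_bound[OF lc] c by auto
    have "d' < d + 4"
    proof (rule ccontr)
      assume "\<not> d' < d + 4"
      then have "griesmer_g k (d + 4) \<le> griesmer_g k d'" using g_mono by simp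
      then show False using gb hN assms(3) by arith
    qed
    moreover have "even d'" using even_weight[OF so c(1)] c(4) by simp
    ultimately show ?thesis using evd by presburger
  qed
  have range: "n - 2 \<le> N"
  proof (cases k')
    case 0
    have "griesmer_g (Suc 0) x = x" for x by (simp add: g_Suc)
    then show ?thesis using hN k 0 by (simp add: n_def D_def)
  next
    case (Suc k'')
    have "4 dvd D" using four_dvd(2)[OF lc0[unfolded k] _ so0 md0] Suc n_def k by simp
    then obtain t where t: "D = 4 * t" by blast
    have t1: "t \<ge> 1" using t D_def by simp
    have e1: "(D + 1) div 2 = 2 * t" using t by simp
    have e2: "(2 * t + 1) div 2 = t" by simp
    have e3: "(d + 2 + 1) div 2 = 2 * t - 1" using t D_def t1 by simp
    have e4: "(2 * t - 1 + 1) div 2 = t" using t1 by simp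
    have "n = D + 2 * t + griesmer_g k'' t"
      unfolding n_def k Suc g_Suc e1 e2 by simp
    moreover have "griesmer_g k (d + 2) = d + 2 + (2 * t - 1) + griesmer_g k'' t"
      unfolding k Suc g_Suc e3 e4 by simp
    ultimately show ?thesis using hN t1 D_def by simp
  qed
  obtain i j where ij: "i < n" "j < n" "i \<noteq> j" and col: "\<forall>x\<in>C0. x ! i = x ! j"
    using equal_cols[OF lc0 big] by blast
  define m where "m = N - (n - 2)"
  have Nm: "N = n - 2 + m" using range by (simp add: m_def)
  obtain C' where lc': "linear_code N k C'" and so': "self_orthogonal C'"
      and nz': "\<forall>x\<in>C'. True \<in> set x \<longrightarrow> D - 2 \<le> weight x"
  proof -
    have D3: "D \<ge> 3" using D_def by simp
    have nzw: "\<forall>x\<in>C0. True \<in> set x \<longrightarrow> D \<le> weight x" using c0 by auto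
    show ?thesis using delete_pad[OF lc0 so0 D3 nzw ij col, where m=m] Nm D_def that by auto
  qed
  obtain c' where c': "c' \<in> C'" "True \<in> set c'" "weight c' = min_dist C'"
    using exists_min[OF lc'[unfolded k]] by blast
  have "min_dist C' = d + 2"
    using upper[OF lc' so' refl] nz' c' D_def by fastforce
  then have mem: "d + 2 \<in> {d. \<exists>C. code N k d C \<and> self_orthogonal C}"
    using lc' so' by (auto simp: code_def)
  have bnd: "\<And>y. y \<in> {d. \<exists>C. code N k d C \<and> self_orthogonal C} \<Longrightarrow> y \<le> d + 2"
    using upper by (auto simp: code_def)
  have fin: "finite {d. \<exists>C. code N k d C \<and> self_orthogonal C}"
    using bnd by (meson finite_atMost atMost_iff finite_subset subsetI)
  show "d_so N k = d + 2"
    unfolding d_so_def by (rule Max_eqI[OF fin bnd mem])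
qed

end
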